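(* In the group-based tree model described in the context (with arbitrary real edge parameters), let $e$ be an internal edge of $\mathscr{T}$ with endpoints $\nu$ and $\nu'$. Choose leaves $i,j$ such that the path between $i$ and $j$ contains $\nu$ but not $\nu'$, and leaves $i',j'$ such that the path between $i'$ and $j'$ contains $\nu'$ but not $\nu$. For $a,b,c,d\in G$ let $z(a,b,c,d)\in G^m$ assign $a,b,c,d$ to leaves $i,j,i',j'$ respectively and $0$ to all other leaves. Then for every $h\in G$ the denominator below is nonzero and $$\big[\check f^{(e)}(h)\big]^2=\frac{q_{z(h,0,-h,0)}\;q_{z(0,-h,0,h)}}{q_{z(h,-h,0,0)}\;q_{z(0,0,-h,h)}}.$$
   Context: Group-based model on a tree. $G$ is a finite abelian group written additively with identity $0$; fix $G\cong\prod_k\mathbb{Z}_{n_k}$ and for $g,h\in G$ put $\hat g(h)=\prod_k\exp(2\pi i\,g_kh_k/n_k)$. The Fourier transform of $a:G\to\mathbb{C}$ is $\check a(g)=\sum_{h\in G}\hat g(h)a(h)$. $\mathscr{T}$ is a finite tree with $m$ leaves, one of which is designated the root leaf $r$. Each edge $e$ carries a function $\psi^{(e)}:G\to\mathbb{R}$ with $\sum_g\psi^{(e)}(g)=0$ and $\psi^{(e)}(g)=\psi^{(e)}(-g)$ (its values at $g\ne0$ are the edge parameters of $e$); put $Q^{(e)}_{g,h}=\psi^{(e)}(h-g)$, $P^{(e)}=\exp(Q^{(e)})$, $f^{(e)}(h)=P^{(e)}_{0,h}$, so $P^{(e)}_{g,h}=f^{(e)}(h-g)$. Edges are directed away from $r$.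 For $\mathbf g\in G^{m}$ (indexed by all leaves, $r$ included), $p_{\mathbf g}=\sum_\sigma\prod_{e=(u\to v)}P^{(e)}_{\sigma(u),\sigma(v)}$, the sum over all maps $\sigma$ from vertices to $G$ with $\sigma(r)=0$ and $\sigma$ equal to $\mathbf g$ on the leaves. The Fourier transform is $q_{\mathbf g}=\sum_{\mathbf h\in G^m}\prod_{x}\hat g_x(h_x)\,p_{\mathbf h}$. For an edge $e$, $\Lambda(e)$ is the set of leaves whose path to $r$ contains $e$, and ${}^*g_e=\sum_{x\in\Lambda(e)}g_x$. It is a known fact (Hendy; Evans–Speed) that $q_{\mathbf g}=\prod_{e}\check f^{(e)}({}^*g_e)$ for all $\mathbf g\in G^m$. An internal edge is one neither of whose endpoints is a leaf. *)

theory Defs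
  imports Complex_Main
begin

text \<open>Concrete model of Z_{n_0} x ... x Z_{n_{K-1}}: integer vectors indexed by k<K
  with 0 <= x k < n k, and x k = 0 for k >= K.\<close>
definition Zprod :: "nat \<Rightarrow> (nat \<Rightarrow> nat) \<Rightarrow> (nat \<Rightarrow> int) set" where
  "Zprod K n = {x. (\<forall>k<K. 0 \<le> x k \<and> x k < int (n k)) \<and> (\<forall>k\<ge>K. x k = 0)}"

definition cyclic_decomp :: "nat \<Rightarrow> (nat \<Rightarrow> nat) \<Rightarrow> ('g::ab_group_add \<Rightarrow> nat \<Rightarrow> int) \<Rightarrow> bool" where
  "cyclic_decomp K n phi \<longleftrightarrow> (\<forall>k<K. 1 \<le> n k) \<and> bij_betw phi UNIV (Zprod K n) \<and>
     (\<forall>a b. \<forall>k<K. phi (a + b) k = (phi a k + phi b k) mod int (n k))"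

definition gchar :: "nat \<Rightarrow> (nat \<Rightarrow> nat) \<Rightarrow> ('g \<Rightarrow> nat \<Rightarrow> int) \<Rightarrow> 'g \<Rightarrow> 'g \<Rightarrow> complex" where
  "gchar K n phi g h = (\<Prod>k<K. cis (2 * pi * real_of_int (phi g k * phi h k) / real (n k)))"

definition fourier :: "nat \<Rightarrow> (nat \<Rightarrow> nat) \<Rightarrow> ('g::finite \<Rightarrow> nat \<Rightarrow> int) \<Rightarrow> ('g \<Rightarrow> real) \<Rightarrow> 'g \<Rightarrow> complex" where
  "fourier K n phi a g = (\<Sum>h\<in>UNIV. gchar K n phi g h * complex_of_real (a h))"

definition mat_mult :: "('g::finite \<Rightarrow> 'g \<Rightarrow> real) \<Rightarrow> ('g \<Rightarrow> 'g \<Rightarrow> real) \<Rightarrow> 'g \<Rightarrow> 'g \<Rightarrow> real" where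
  "mat_mult A B g h = (\<Sum>k\<in>UNIV. A g k * B k h)"

fun mat_pow :: "('g::finite \<Rightarrow> 'g \<Rightarrow> real) \<Rightarrow> nat \<Rightarrow> 'g \<Rightarrow> 'g \<Rightarrow> real" where
  "mat_pow A 0 = (\<lambda>g h. if g = h then 1 else 0)"
| "mat_pow A (Suc j) = mat_mult (mat_pow A j) A"

definition mat_exp :: "('g::finite \<Rightarrow> 'g \<Rightarrow> real) \<Rightarrow> 'g \<Rightarrow> 'g \<Rightarrow> real" where
  "mat_exp A g h = (\<Sum>j. mat_pow A j g h / fact j)"

definition Qmat :: "('g::ab_group_add \<Rightarrow> real) \<Rightarrow> 'g \<Rightarrow> 'g \<Rightarrow> real" where
  "Qmat psi g h = psi (h - g)"

definition Pmat :: "('g::{finite,ab_group_add} \<Rightarrow> real) \<Rightarrow> 'g \<Rightarrow> 'g \<Rightarrow> real" where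
  "Pmat psi = mat_exp (Qmat psi)"

definition fvec :: "('g::{finite,ab_group_add} \<Rightarrow> real) \<Rightarrow> 'g \<Rightarrow> real" where
  "fvec psi h = Pmat psi 0 h"

text \<open>A finite tree with vertex set V given by a set D of directed edges, directed away
  from the vertex r: every vertex other than r has exactly one incoming edge, r has none,
  and every vertex is reachable from r.\<close>
definition tree_directed_from :: "'v set \<Rightarrow> ('v \<times> 'v) set \<Rightarrow> 'v \<Rightarrow> bool" where
  "tree_directed_from V D r \<longleftrightarrow> finite V \<and> D \<subseteq> V \<times> V \<and> r \<in> V \<and>
     (\<forall>u. (u, r) \<notin> D) \<and> (\<forall>v\<in>V. v \<noteq> r \<longrightarrow> (\<exists>!u. (u, v) \<in> D)) \<and>
     (\<forall>v\<in>V. (r, v) \<in> D\<^sup>*)"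

definition adj :: "('v \<times> 'v) set \<Rightarrow> 'v \<Rightarrow> 'v \<Rightarrow> bool" where
  "adj D u v \<longleftrightarrow> (u, v) \<in> D \<or> (v, u) \<in> D"

definition leaves :: "'v set \<Rightarrow> ('v \<times> 'v) set \<Rightarrow> 'v set" where
  "leaves V D = {v \<in> V. card {w. adj D v w} = 1}"

definition internal_edge :: "'v set \<Rightarrow> ('v \<times> 'v) set \<Rightarrow> 'v \<times> 'v \<Rightarrow> bool" where
  "internal_edge V D e \<longleftrightarrow> e \<in> D \<and> fst e \<notin> leaves V D \<and> snd e \<notin> leaves V D"

definition tpath :: "('v \<times> 'v) set \<Rightarrow> 'v \<Rightarrow> 'v \<Rightarrow> 'v list \<Rightarrow> bool" where
  "tpath D x y xs \<longleftrightarrow> xs \<noteq> [] \<and> hd xs = x \<and> last xs = y \<and> distinct xs \<and>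
     (\<forall>k. Suc k < length xs \<longrightarrow> adj D (xs ! k) (xs ! Suc k))"

definition on_path :: "('v \<times> 'v) set \<Rightarrow> 'v \<Rightarrow> 'v \<Rightarrow> 'v \<Rightarrow> bool" where
  "on_path D x y w \<longleftrightarrow> (\<exists>xs. tpath D x y xs \<and> w \<in> set xs)"

text \<open>Elements of G^m (indexed by the leaves L) are functions that vanish off L.\<close>
definition leaf_cfgs :: "'v set \<Rightarrow> ('v \<Rightarrow> 'g::zero) set" where
  "leaf_cfgs L = {g. \<forall>x. x \<notin> L \<longrightarrow> g x = 0}"

definition pprob :: "'v set \<Rightarrow> ('v \<times> 'v) set \<Rightarrow> 'v \<Rightarrow> ('v \<times> 'v \<Rightarrow> 'g::{finite,ab_group_add} \<Rightarrow> real)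
     \<Rightarrow> ('v \<Rightarrow> 'g) \<Rightarrow> real" where
  "pprob V D r psi g = (\<Sum>\<sigma>\<in>{\<sigma>. (\<forall>x. x \<notin> V \<longrightarrow> \<sigma> x = 0) \<and> \<sigma> r = 0 \<and>
        (\<forall>x\<in>leaves V D. \<sigma> x = g x)}.
      \<Prod>e\<in>D. Pmat (psi e) (\<sigma> (fst e)) (\<sigma> (snd e)))"

definition qfour :: "nat \<Rightarrow> (nat \<Rightarrow> nat) \<Rightarrow> ('g::{finite,ab_group_add} \<Rightarrow> nat \<Rightarrow> int) \<Rightarrow>
     'v set \<Rightarrow> ('v \<times> 'v) set \<Rightarrow> 'v \<Rightarrow> ('v \<times> 'v \<Rightarrow> 'g \<Rightarrow> real) \<Rightarrow> ('v \<Rightarrow> 'g) \<Rightarrow> complex" where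
  "qfour K n phi V D r psi g = (\<Sum>h\<in>leaf_cfgs (leaves V D).
      (\<Prod>x\<in>leaves V D. gchar K n phi (g x) (h x)) * complex_of_real (pprob V D r psi h))"

definition zcfg :: "'v \<Rightarrow> 'v \<Rightarrow> 'v \<Rightarrow> 'v \<Rightarrow> 'g::zero \<Rightarrow> 'g \<Rightarrow> 'g \<Rightarrow> 'g \<Rightarrow> 'v \<Rightarrow> 'g" where
  "zcfg i j i' j' a b c d = (\<lambda>x. if x = i then a else if x = j then b else
      if x = i' then c else if x = j' then d else 0)"

end

theory Submission
  imports Defs "HOL-Library.FuncSet"
begin

lemma cis_aux:
  fixes x y z :: int and N :: nat
  assumes "N > 0"
  shows "cis (2*pi*real_of_int (((x + y) mod int N) * z) / real N) =
         cis (2*pi*real_of_int (x*z)/real N) * cis (2*pi*real_of_int (y*z)/real N)"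
proof -
  define q where "q = (x+y) div int N"
  have m: "(x+y) mod int N = x + y - int N * q" unfolding q_def by (simp add: minus_div_mult_eq_mod[symmetric])
  have "2*pi*real_of_int (((x + y) mod int N) * z) / real N
      = 2*pi*real_of_int (x*z)/real N + 2*pi*real_of_int (y*z)/real N + 2*pi*real_of_int (-(q*z))"
    using assms unfolding m by (simp add: field_simps)
  then have "cis (2*pi*real_of_int (((x + y) mod int N) * z) / real N)
      = cis (2*pi*real_of_int (x*z)/real N) * cis (2*pi*real_of_int (y*z)/real N) * cis (2*pi*real_of_int (-(q*z)))"
    by (simp add: cis_mult)
  also have "cis (2*pi*real_of_int (-(q*z))) = 1" by (rule cis_multiple_2pi) simp
  finally show ?thesis by simp
qed

lemma gchar_comm: "gchar K n phi g h = gchar K n phi h g"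
  unfolding gchar_def by (simp add: mult.commute)

lemma gchar_add1:
  assumes "cyclic_decomp K n phi"
  shows "gchar K n phi (a+b) t = gchar K n phi a t * gchar K n phi b t"
proof -
  have "\<And>k. k \<in> {..<K} \<Longrightarrow> cis (2 * pi * real_of_int (phi (a+b) k * phi t k) / real (n k))
     = cis (2 * pi * real_of_int (phi a k * phi t k) / real (n k)) * cis (2 * pi * real_of_int (phi b k * phi t k) / real (n k))"
  proof -
    fix k assume k: "k \<in> {..<K}"
    then have "n k > 0" "phi (a+b) k = (phi a k + phi b k) mod int (n k)"
      using assms unfolding cyclic_decomp_def by auto
    then show "?thesis k" using cis_aux by simp
  qed
  then show ?thesis unfolding gchar_def prod.distrib[symmetric] by (rule prod.cong[OF refl])
qed

lemma gchar_add2: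
  assumes "cyclic_decomp K n phi"
  shows "gchar K n phi t (a+b) = gchar K n phi t a * gchar K n phi t b"
  using gchar_add1[OF assms, of a b t] by (simp only: gchar_comm[of K n phi t])

lemma gchar_nz: "gchar K n phi g h \<noteq> 0"
  unfolding gchar_def by (simp add: cis_neq_zero)

lemma gchar_zero1:
  assumes "cyclic_decomp K n phi"
  shows "gchar K n phi 0 t = 1"
proof -
  have "gchar K n phi 0 t = gchar K n phi 0 t * gchar K n phi 0 t"
    using gchar_add1[OF assms, of 0 0 t] by simp
  then show ?thesis using gchar_nz[of K n phi 0 t] by (metis mult_cancel_left1)
qed

lemma gchar_zero2:
  assumes "cyclic_decomp K n phi"
  shows "gchar K n phi t 0 = 1"
  using gchar_zero1[OF assms, of t] by (simp only: gchar_comm[of K n phi t])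

lemma gchar_neg:
  assumes "cyclic_decomp K n phi"
  shows "gchar K n phi (-g) t = gchar K n phi g (-t)"
proof -
  have 1: "gchar K n phi (-g) t * gchar K n phi g t = 1"
    using gchar_add1[OF assms, of "-g" g t] gchar_zero1[OF assms] by simp
  have 2: "gchar K n phi g (-t) * gchar K n phi g t = 1"
    using gchar_add2[OF assms, of g "-t" t] gchar_zero2[OF assms] by simp
  from 1 2 gchar_nz[of K n phi g t] show ?thesis by (metis mult_cancel_right)
qed

lemma gchar_sum1:
  assumes "cyclic_decomp K n phi"
  shows "gchar K n phi (\<Sum>x\<in>X. a x) t = (\<Prod>x\<in>X. gchar K n phi (a x) t)"
proof (induction X rule: infinite_finite_induct)
  case (infinite A) then show ?case by (simp add: gchar_zero1[OF assms])
next
  case empty then show ?case by (simp add: gchar_zero1[OF assms])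
next
  case (insert x F) then show ?case by (simp add: gchar_add1[OF assms])
qed

lemma gchar_sum2:
  assumes "cyclic_decomp K n phi"
  shows "gchar K n phi t (\<Sum>x\<in>X. a x) = (\<Prod>x\<in>X. gchar K n phi t (a x))"
  using gchar_sum1[OF assms, of a X t] by (simp only: gchar_comm[of K n phi t])

lemma sum_shift:
  fixes F :: "'g::{finite,ab_group_add} \<Rightarrow> 'a::comm_monoid_add"
  shows "(\<Sum>k\<in>UNIV. F (k + c)) = (\<Sum>k\<in>UNIV. F k)"
  by (rule sum.reindex_bij_witness[of _ "\<lambda>k. k - c" "\<lambda>k. k + c"]) auto

lemma sum_neg:
  fixes F :: "'g::{finite,ab_group_add} \<Rightarrow> 'a::comm_monoid_add"
  shows "(\<Sum>k\<in>UNIV. F (- k)) = (\<Sum>k\<in>UNIV. F k)"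
  by (rule sum.reindex_bij_witness[of _ "\<lambda>k. - k" "\<lambda>k. - k"]) auto

lemma mat_pow_shift:
  fixes psi :: "'g::{finite,ab_group_add} \<Rightarrow> real"
  shows "mat_pow (Qmat psi) j (a+c) (b+c) = mat_pow (Qmat psi) j a b"
proof (induction j arbitrary: b)
  case 0 then show ?case by simp
next
  case (Suc j)
  have "mat_pow (Qmat psi) (Suc j) (a+c) (b+c) = (\<Sum>k\<in>UNIV. mat_pow (Qmat psi) j (a+c) k * Qmat psi k (b+c))"
    by (simp add: mat_mult_def)
  also have "\<dots> = (\<Sum>k\<in>UNIV. mat_pow (Qmat psi) j (a+c) (k+c) * Qmat psi (k+c) (b+c))"
    by (rule sum_shift[symmetric])
  also have "\<dots> = (\<Sum>k\<in>UNIV. mat_pow (Qmat psi) j a k * Qmat psi k b)"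
    by (intro sum.cong refl, subst Suc.IH, simp add: Qmat_def)
  finally show ?case by (simp add: mat_mult_def)
qed

lemma Pmat_circ:
  fixes psi :: "'g::{finite,ab_group_add} \<Rightarrow> real"
  shows "Pmat psi a b = fvec psi (b - a)"
proof -
  have "\<And>j. mat_pow (Qmat psi) j a b = mat_pow (Qmat psi) j 0 (b - a)"
    using mat_pow_shift[of psi _ 0 a "b - a"] by simp
  then show ?thesis unfolding fvec_def Pmat_def mat_exp_def by simp
qed

lemma mat_pow_bound:
  fixes A :: "'g::finite \<Rightarrow> 'g \<Rightarrow> real"
  shows "\<bar>mat_pow A j g h\<bar> \<le> (\<Sum>k\<in>UNIV. \<Sum>l\<in>UNIV. \<bar>A k l\<bar>) ^ j"
proof (induction j arbitrary: h)
  case 0 then show ?case by simp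
next
  case (Suc j)
  define C where "C = (\<Sum>k\<in>UNIV. \<Sum>l\<in>UNIV. \<bar>A k l\<bar>)"
  have C0: "C \<ge> 0" unfolding C_def by (intro sum_nonneg) auto
  have "\<bar>mat_pow A (Suc j) g h\<bar> \<le> (\<Sum>k\<in>UNIV. \<bar>mat_pow A j g k * A k h\<bar>)"
    by (simp add: mat_mult_def sum_abs)
  also have "\<dots> \<le> (\<Sum>k\<in>UNIV. C ^ j * \<bar>A k h\<bar>)"
    by (intro sum_mono) (use Suc C_def in \<open>auto simp: abs_mult intro: mult_right_mono\<close>)
  also have "\<dots> = C ^ j * (\<Sum>k\<in>UNIV. \<bar>A k h\<bar>)" by (simp add: sum_distrib_left)
  also have "\<dots> \<le> C ^ j * C"
  proof (intro mult_left_mono)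
    show "(\<Sum>k\<in>UNIV. \<bar>A k h\<bar>) \<le> C" unfolding C_def
      by (intro sum_mono) (rule member_le_sum, auto)
  qed (use C0 in auto)
  finally show ?case by (simp add: C_def mult.commute)
qed

lemma mat_pow_sums:
  fixes A :: "'g::finite \<Rightarrow> 'g \<Rightarrow> real"
  shows "(\<lambda>j. mat_pow A j g h / fact j) sums mat_exp A g h"
proof -
  define C where "C = (\<Sum>k\<in>UNIV. \<Sum>l\<in>UNIV. \<bar>A k l\<bar>)"
  have "summable (\<lambda>j. inverse (fact j) * C ^ j)" by (rule summable_exp)
  then have "summable (\<lambda>j. mat_pow A j g h / fact j)"
  proof (rule summable_comparison_test')
    fix j :: nat
    show "norm (mat_pow A j g h / fact j) \<le> inverse (fact j) * C ^ j"
      using mat_pow_bound[of A j g h] unfolding C_def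
      by (simp add: abs_mult divide_inverse mult.commute mult_left_mono)
  qed
  then show ?thesis unfolding mat_exp_def by (rule summable_sums)
qed

definition lam :: "nat \<Rightarrow> (nat \<Rightarrow> nat) \<Rightarrow> ('g \<Rightarrow> nat \<Rightarrow> int) \<Rightarrow> ('g::finite \<Rightarrow> real) \<Rightarrow> 'g \<Rightarrow> complex" where
  "lam K n phi psi g = (\<Sum>t\<in>UNIV. gchar K n phi g t * complex_of_real (psi t))"

lemma eigen:
  fixes psi :: "'g::{finite,ab_group_add} \<Rightarrow> real"
  assumes cd: "cyclic_decomp K n phi"
  shows "(\<Sum>b\<in>UNIV. gchar K n phi g b * complex_of_real (mat_pow (Qmat psi) j a b))
         = lam K n phi psi g ^ j * gchar K n phi g a"
proof (induction j arbitrary: a)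
  case 0
  have "(\<Sum>b\<in>UNIV. gchar K n phi g b * complex_of_real (if a = b then 1 else 0))
     = (\<Sum>b\<in>UNIV. if a = b then gchar K n phi g b else 0)"
    by (intro sum.cong) auto
  then show ?case by simp
next
  case (Suc j)
  let ?M = "mat_pow (Qmat psi) j" and ?X = "gchar K n phi g"
  have inner: "(\<Sum>b\<in>UNIV. ?X b * complex_of_real (Qmat psi k b)) = lam K n phi psi g * ?X k" for k
  proof -
    have "(\<Sum>b\<in>UNIV. ?X b * complex_of_real (Qmat psi k b))
        = (\<Sum>b\<in>UNIV. ?X (b + k) * complex_of_real (Qmat psi k (b + k)))"
      by (rule sum_shift[symmetric])
    also have "\<dots> = (\<Sum>b\<in>UNIV. ?X k * (?X b * complex_of_real (psi b)))"
      by (intro sum.cong) (auto simp: Qmat_def gchar_add2[OF cd])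
    finally show ?thesis by (simp add: lam_def sum_distrib_left mult.commute)
  qed
  have "(\<Sum>b\<in>UNIV. ?X b * complex_of_real (mat_pow (Qmat psi) (Suc j) a b))
      = (\<Sum>b\<in>UNIV. \<Sum>k\<in>UNIV. complex_of_real (?M a k) * (?X b * complex_of_real (Qmat psi k b)))"
    by (simp add: mat_mult_def sum_distrib_left mult_ac)
  also have "\<dots> = (\<Sum>k\<in>UNIV. complex_of_real (?M a k) * (\<Sum>b\<in>UNIV. ?X b * complex_of_real (Qmat psi k b)))"
    by (subst sum.swap) (simp add: sum_distrib_left)
  also have "\<dots> = (\<Sum>k\<in>UNIV. complex_of_real (?M a k) * (lam K n phi psi g * ?X k))"
    by (intro sum.cong refl) (simp only: inner)
  also have "\<dots> = lam K n phi psi g * (\<Sum>k\<in>UNIV. ?X k * complex_of_real (?M a k))"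
    by (simp add: sum_distrib_left mult_ac)
  also have "\<dots> = lam K n phi psi g ^ Suc j * ?X a" using Suc by simp
  finally show ?case .
qed

lemma fourier_fvec:
  fixes psi :: "'g::{finite,ab_group_add} \<Rightarrow> real"
  assumes cd: "cyclic_decomp K n phi"
  shows "fourier K n phi (fvec psi) g = exp (lam K n phi psi g)"
proof -
  let ?X = "gchar K n phi g"
  have s: "(\<lambda>j. \<Sum>b\<in>UNIV. ?X b * complex_of_real (mat_pow (Qmat psi) j 0 b / fact j))
      sums (\<Sum>b\<in>UNIV. ?X b * complex_of_real (fvec psi b))"
  proof (rule sums_sum)
    fix b :: 'g
    have "(\<lambda>j. complex_of_real (mat_pow (Qmat psi) j 0 b / fact j)) sums complex_of_real (fvec psi b)"
      unfolding sums_of_real_iff fvec_def Pmat_def by (rule mat_pow_sums)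
    then show "(\<lambda>j. ?X b * complex_of_real (mat_pow (Qmat psi) j 0 b / fact j)) sums (?X b * complex_of_real (fvec psi b))"
      by (rule sums_mult)
  qed
  have "(\<lambda>j. \<Sum>b\<in>UNIV. ?X b * complex_of_real (mat_pow (Qmat psi) j 0 b / fact j))
      = (\<lambda>j. lam K n phi psi g ^ j /\<^sub>R fact j)"
  proof
    fix j
    have "(\<Sum>b\<in>UNIV. ?X b * complex_of_real (mat_pow (Qmat psi) j 0 b / fact j))
        = (\<Sum>b\<in>UNIV. ?X b * complex_of_real (mat_pow (Qmat psi) j 0 b)) / fact j"
      by (simp add: sum_divide_distrib)
    also have "\<dots> = lam K n phi psi g ^ j / fact j"
      using eigen[OF cd, of g psi j 0] by (simp add: gchar_zero2[OF cd])
    finally show "(\<Sum>b\<in>UNIV. ?X b * complex_of_real (mat_pow (Qmat psi) j 0 b / fact j))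
       = lam K n phi psi g ^ j /\<^sub>R fact j" by (simp add: scaleR_conv_of_real divide_inverse mult.commute)
  qed
  with s have "(\<lambda>j. lam K n phi psi g ^ j /\<^sub>R fact j) sums (\<Sum>b\<in>UNIV. ?X b * complex_of_real (fvec psi b))"
    by simp
  then show ?thesis using exp_converges sums_unique2 unfolding fourier_def by blast
qed

lemma lam_zero:
  fixes psi :: "'g::{finite,ab_group_add} \<Rightarrow> real"
  assumes cd: "cyclic_decomp K n phi" and "(\<Sum>g\<in>UNIV. psi g) = 0"
  shows "lam K n phi psi 0 = 0"
  using assms by (simp add: lam_def gchar_zero1[OF cd] flip: of_real_sum)

lemma lam_neg:
  fixes psi :: "'g::{finite,ab_group_add} \<Rightarrow> real"
  assumes cd: "cyclic_decomp K n phi" and s: "\<forall>g. psi g = psi (- g)"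
  shows "lam K n phi psi (- g) = lam K n phi psi g"
proof -
  have "lam K n phi psi (- g) = (\<Sum>t\<in>UNIV. gchar K n phi g (- t) * complex_of_real (psi (- t)))"
    unfolding lam_def gchar_neg[OF cd] using s by (metis)
  also have "\<dots> = lam K n phi psi g" unfolding lam_def by (rule sum_neg)
  finally show ?thesis .
qed

context
  fixes V :: "'v set" and D :: "('v \<times> 'v) set" and r :: 'v
  assumes T: "tree_directed_from V D r"
begin

lemma T_finV: "finite V" using T unfolding tree_directed_from_def by auto
lemma T_sub: "(u,v) \<in> D \<Longrightarrow> u \<in> V \<and> v \<in> V" using T unfolding tree_directed_from_def by auto
lemma T_finD: "finite D"
proof -
  have "D \<subseteq> V \<times> V" using T unfolding tree_directed_from_def by auto
  then show ?thesis using T_finV finite_subset by blast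
qed
lemma T_rV: "r \<in> V" using T unfolding tree_directed_from_def by auto
lemma T_noroot: "(u,r) \<notin> D" using T unfolding tree_directed_from_def by auto
lemma T_par: "(u,v) \<in> D \<Longrightarrow> (w,v) \<in> D \<Longrightarrow> u = w"
proof -
  assume a: "(u,v) \<in> D" "(w,v) \<in> D"
  then have "v \<in> V" "v \<noteq> r" using T_sub T_noroot by auto
  then have "\<exists>!u. (u,v) \<in> D" using T unfolding tree_directed_from_def by auto
  then show ?thesis using a by auto
qed
lemma T_reach: "x \<in> V \<Longrightarrow> (r,x) \<in> D\<^sup>*" using T unfolding tree_directed_from_def by auto

lemma acyc_aux: "(r,x) \<in> D\<^sup>* \<Longrightarrow> (x,x) \<notin> D\<^sup>+"
proof (induction rule: rtrancl_induct)
  case base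
  show ?case
  proof
    assume rr: "(r,r) \<in> D\<^sup>+"
    obtain z where "(z,r) \<in> D" using tranclD2[OF rr] by blast
    then show False using T_noroot by simp
  qed
next
  case (step y x)
  show ?case
  proof
    assume xx: "(x,x) \<in> D\<^sup>+"
    obtain w where w: "(x,w) \<in> D\<^sup>*" "(w,x) \<in> D" using tranclD2[OF xx] by blast
    have wy: "w = y" using T_par[OF w(2) step(2)] .
    have "(y,y) \<in> D\<^sup>+" using rtrancl_into_trancl2[OF step(2)] w(1) wy by simp
    then show False using step(3) by simp
  qed
qed

lemma T_acyc: "(x,x) \<notin> D\<^sup>+"
proof
  assume x: "(x,x) \<in> D\<^sup>+"
  obtain y where "(x,y) \<in> D" using tranclD[OF x] by blast
  then have "x \<in> V" using T_sub by blast
  then have "(r,x) \<in> D\<^sup>*" by (rule T_reach)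
  then have "(x,x) \<notin> D\<^sup>+" by (rule acyc_aux)
  with x show False by simp
qed

lemma T_noloop: "(x,x) \<notin> D" using T_acyc by auto

lemma T_up:
  assumes "(a,x) \<in> D\<^sup>*" "(w,x) \<in> D" "a \<noteq> x" shows "(a,w) \<in> D\<^sup>*"
  using assms(1)
proof (cases rule: rtranclE)
  case base then show ?thesis using assms by simp
next
  case (step y)
  then have "y = w" using T_par assms(2) by blast
  then show ?thesis using step by simp
qed

definition anc :: "'v \<Rightarrow> ('v \<times> 'v) set" where
  "anc x = {d \<in> D. (snd d, x) \<in> D\<^sup>*}"

lemma anc_eq: "anc x = {d. d \<in> D \<and> (snd d, x) \<in> D\<^sup>*}" unfolding anc_def by simp

lemma anc_sub: "anc x \<subseteq> D" unfolding anc_def by auto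
lemma anc_fin: "finite (anc x)" using anc_sub T_finD finite_subset by blast

lemma anc_step:
  assumes uv: "(u,v) \<in> D"
  shows "anc v = insert (u,v) (anc u)" and "(u,v) \<notin> anc u"
proof -
  show "anc v = insert (u,v) (anc u)"
  proof
    show "anc v \<subseteq> insert (u,v) (anc u)"
    proof
      fix d assume d: "d \<in> anc v"
      then have dD: "d \<in> D" and dv: "(snd d, v) \<in> D\<^sup>*" unfolding anc_def by auto
      show "d \<in> insert (u,v) (anc u)"
      proof (cases "snd d = v")
        case True
        then have "(fst d, v) \<in> D" using dD by (metis prod.collapse)
        then have "fst d = u" using T_par uv by blast
        then show ?thesis using True by (metis insertI1 prod.collapse)
      next
        case False
        then have "(snd d, u) \<in> D\<^sup>*" using T_up dv uv by blast
        then show ?thesis using dD unfolding anc_def by auto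
      qed
    qed
  next
    show "insert (u,v) (anc u) \<subseteq> anc v"
      using uv unfolding anc_def by (auto intro: rtrancl_into_rtrancl)
  qed
  show "(u,v) \<notin> anc u"
  proof
    assume "(u,v) \<in> anc u"
    then have "(v,u) \<in> D\<^sup>*" unfolding anc_def by auto
    then have "(u,u) \<in> D\<^sup>+" using uv rtrancl_into_trancl2[of u v D u] by simp
    then show False using T_acyc by auto
  qed
qed

lemma anc_root: "anc r = {}"
proof -
  have "False" if dD: "d \<in> D" and sr: "(snd d, r) \<in> D\<^sup>*" for d
  proof (cases "snd d = r")
    case True then show False using dD T_noroot by (metis prod.collapse)
  next
    case False
    then obtain y where "(y,r) \<in> D" using sr by (metis rtranclE)
    then show False using T_noroot by auto
  qed
  then show ?thesis unfolding anc_def by auto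
qed

lemma telescope:
  fixes \<sigma> :: "'v \<Rightarrow> 'g::ab_group_add"
  assumes "\<sigma> r = 0" and "x \<in> V"
  shows "\<sigma> x = (\<Sum>d\<in>anc x. \<sigma> (snd d) - \<sigma> (fst d))"
proof -
  have "(r,x) \<in> D\<^sup>*" using assms T_reach by auto
  then show ?thesis
  proof (induction rule: rtrancl_induct)
    case base then show ?case using assms anc_root by simp
  next
    case (step y x)
    then show ?case using anc_step[OF step(2)] anc_fin by simp
  qed
qed

lemma acl:
  assumes uv: "(u,v) \<in> D" and a: "(v,a) \<in> D\<^sup>*" and b: "(v,b) \<notin> D\<^sup>*" and ab: "adj D a b"
  shows "a = v \<and> b = u"
proof (cases "(a,b) \<in> D")
  case True
  have "(v,b) \<in> D\<^sup>*" using a True by (rule rtrancl_into_rtrancl)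
  then show ?thesis using b by simp
next
  case False
  then have ba: "(b,a) \<in> D" using ab unfolding adj_def by auto
  have "a = v"
  proof (rule ccontr)
    assume "a \<noteq> v"
    then have "(v,b) \<in> D\<^sup>*" using T_up a ba by blast
    then show False using b by auto
  qed
  then show ?thesis using ba uv T_par by auto
qed

end

lemma adj_sym: "adj D a b = adj D b a" unfolding adj_def by auto

lemma succ_rev_adj: "successively (adj D) (rev xs) = successively (adj D) xs"
proof -
  have e: "(\<lambda>x y. adj D y x) = adj D" by (intro ext) (simp add: adj_def, blast)
  show ?thesis by (subst successively_rev, subst e, rule refl)
qed

lemma tpath_succ: "tpath D x y xs \<Longrightarrow> successively (adj D) xs"
  unfolding tpath_def successively_conv_nth by blast

context
  fixes V :: "'v set" and D :: "('v \<times> 'v) set" and r :: 'v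
  assumes T: "tree_directed_from V D r"
begin

lemma R_out:
  assumes uv: "(u,v) \<in> D"
  shows "successively (adj D) ys \<Longrightarrow> ys \<noteq> [] \<Longrightarrow> (v, hd ys) \<notin> D\<^sup>* \<Longrightarrow> v \<notin> set ys
     \<Longrightarrow> \<forall>y\<in>set ys. (v,y) \<notin> D\<^sup>*"
proof (induction ys)
  case Nil then show ?case by simp
next
  case (Cons b zs)
  note IH = Cons.IH and pr = Cons.prems
  show ?case
  proof (cases zs)
    case Nil then show ?thesis using pr by simp
  next
    case (Cons c ws)
    have "adj D b c" using pr(1) unfolding \<open>zs = c # ws\<close> by simp
    then have bc: "adj D c b" unfolding adj_def by blast
    have bo: "(v,b) \<notin> D\<^sup>*" using pr(3) by simp
    have c_out: "(v,c) \<notin> D\<^sup>*"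
    proof
      assume ci: "(v,c) \<in> D\<^sup>*"
      have "c = v" using acl[OF T uv ci bo bc] by simp
      then show False using pr(4) \<open>zs = c # ws\<close> by simp
    qed
    have s2: "successively (adj D) zs" using pr(1) unfolding \<open>zs = c # ws\<close> by simp
    have "\<forall>y\<in>set zs. (v,y) \<notin> D\<^sup>*"
      using IH[OF s2] pr(4) c_out \<open>zs = c # ws\<close> by simp
    then show ?thesis using bo by simp
  qed
qed

lemma Q_cross:
  assumes uv: "(u,v) \<in> D"
  shows "successively (adj D) xs \<Longrightarrow> distinct xs \<Longrightarrow> xs \<noteq> [] \<Longrightarrow> (v, hd xs) \<in> D\<^sup>*
     \<Longrightarrow> (\<exists>x\<in>set xs. (v,x) \<notin> D\<^sup>*) \<Longrightarrow> v \<in> set xs \<and> u \<in> set xs \<and> (v, last xs) \<notin> D\<^sup>*"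
proof (induction xs)
  case Nil then show ?case by simp
next
  case (Cons a ys)
  note IH = Cons.IH and pr = Cons.prems
  have ai: "(v,a) \<in> D\<^sup>*" using pr(4) by simp
  show ?case
  proof (cases ys)
    case Nil then show ?thesis using pr(5) ai by simp
  next
    case (Cons b zs)
    have ab: "adj D a b" using pr(1) unfolding \<open>ys = b # zs\<close> by simp
    have s2: "successively (adj D) ys" using pr(1) unfolding \<open>ys = b # zs\<close> by simp
    have d2: "distinct ys" using pr(2) by simp
    show ?thesis
    proof (cases "(v,b) \<in> D\<^sup>*")
      case True
      have ex: "\<exists>x\<in>set ys. (v,x) \<notin> D\<^sup>*" using pr(5) ai by auto
      have "v \<in> set ys \<and> u \<in> set ys \<and> (v, last ys) \<notin> D\<^sup>*"
        using IH[OF s2 d2 _ _ ex] True \<open>ys = b # zs\<close> by simp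
      then show ?thesis using \<open>ys = b # zs\<close> by simp
    next
      case False
      have av: "a = v \<and> b = u" using acl[OF T uv ai False ab] by simp
      have "v \<notin> set ys" using pr(2) av by auto
      then have "\<forall>y\<in>set ys. (v,y) \<notin> D\<^sup>*"
        using R_out[OF uv s2] False \<open>ys = b # zs\<close> by simp
      then have "(v, last ys) \<notin> D\<^sup>*" using \<open>ys = b # zs\<close> by simp
      then show ?thesis using av \<open>ys = b # zs\<close> by simp
    qed
  qed
qed

lemma P_cross:
  assumes uv: "(u,v) \<in> D" and p: "tpath D x y xs" and ne: "((v,x) \<in> D\<^sup>*) \<noteq> ((v,y) \<in> D\<^sup>*)"
  shows "u \<in> set xs \<and> v \<in> set xs"
proof -
  have s: "successively (adj D) xs" "distinct xs" "xs \<noteq> []" "hd xs = x" "last xs = y"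
    using p tpath_succ[OF p] unfolding tpath_def by auto
  have yin: "y \<in> set xs" "x \<in> set xs" using s(3-5) by auto
  show ?thesis
  proof (cases "(v,x) \<in> D\<^sup>*")
    case True
    then have "(v,y) \<notin> D\<^sup>*" using ne by simp
    then have ex: "\<exists>z\<in>set xs. (v,z) \<notin> D\<^sup>*" using yin by blast
    show ?thesis using Q_cross[OF uv s(1-3) _ ex] s(4) True by simp
  next
    case False
    then have yi: "(v,y) \<in> D\<^sup>*" using ne by simp
    have r1: "successively (adj D) (rev xs)" by (subst succ_rev_adj) (rule s(1))
    have r2: "distinct (rev xs)" "rev xs \<noteq> []" using s by auto
    have r3: "hd (rev xs) = y" using s by (simp add: hd_rev)
    have ex: "\<exists>z\<in>set (rev xs). (v,z) \<notin> D\<^sup>*" using yin False by auto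
    show ?thesis using Q_cross[OF uv r1 r2 _ ex] r3 yi by simp
  qed
qed

lemma P_same:
  assumes uv: "(u,v) \<in> D" and p: "tpath D x y xs" and eq: "((v,x) \<in> D\<^sup>*) = ((v,y) \<in> D\<^sup>*)"
    and w: "w \<in> set xs"
  shows "((v,w) \<in> D\<^sup>*) = ((v,x) \<in> D\<^sup>*)"
proof -
  have s: "successively (adj D) xs" "distinct xs" "xs \<noteq> []" "hd xs = x" "last xs = y"
    using p tpath_succ[OF p] unfolding tpath_def by auto
  show ?thesis
  proof (cases "(v,x) \<in> D\<^sup>*")
    case True
    show ?thesis
    proof (rule ccontr)
      assume "((v,w) \<in> D\<^sup>*) \<noteq> ((v,x) \<in> D\<^sup>*)"
      then have "(v,w) \<notin> D\<^sup>*" using True by simp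
      then have ex: "\<exists>z\<in>set xs. (v,z) \<notin> D\<^sup>*" using w by blast
      have "(v, last xs) \<notin> D\<^sup>*" using Q_cross[OF uv s(1-3) _ ex] s(4) True by simp
      then show False using s(5) eq True by simp
    qed
  next
    case False
    show ?thesis
    proof (rule ccontr)
      assume "((v,w) \<in> D\<^sup>*) \<noteq> ((v,x) \<in> D\<^sup>*)"
      then have wi: "(v,w) \<in> D\<^sup>*" using False by simp
      have yo: "(v,y) \<notin> D\<^sup>*" using False eq by simp
      obtain ys zs where xs: "xs = ys @ w # zs" using split_list[OF w] by blast
      have s1: "successively (adj D) (w # zs)" "successively (adj D) (ys @ [w])"
        using s(1) unfolding xs by (auto simp: successively_append_iff)
      have d1: "distinct (w # zs)" "distinct (ys @ [w])" using s(2) unfolding xs by auto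
      have "last (w # zs) = y" using s(5) unfolding xs by simp
      then have ex1: "\<exists>z\<in>set (w # zs). (v,z) \<notin> D\<^sup>*" using yo last_in_set[of "w # zs"] by auto
      have A: "v \<in> set (w # zs) \<and> u \<in> set (w # zs)"
        using Q_cross[OF uv s1(1) d1(1) _ _ ex1] wi by simp
      have r1: "successively (adj D) (rev (ys @ [w]))" using s1(2) succ_rev_adj by blast
      have r2: "distinct (rev (ys @ [w]))" "rev (ys @ [w]) \<noteq> []" using d1 by auto
      have r3: "hd (rev (ys @ [w])) = w" by simp
      have "x \<in> set (ys @ [w])" using s(4) unfolding xs by (cases ys) auto
      then have ex2: "\<exists>z\<in>set (rev (ys @ [w])). (v,z) \<notin> D\<^sup>*" using False by auto
      have B: "v \<in> set (ys @ [w]) \<and> u \<in> set (ys @ [w])"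
        using Q_cross[OF uv r1 r2 _ ex2] r3 wi by simp
      have "set (ys @ [w]) \<inter> set (w # zs) = {w}" using s(2) unfolding xs by auto
      then have "u = w" "v = w" using A B by blast+
      then show False using uv T_noloop[OF T] by simp
    qed
  qed
qed

end

lemma leaves_sub: "leaves V D \<subseteq> V" unfolding leaves_def by auto

lemma finite_zero_funs: "finite A \<Longrightarrow> finite {f :: 'a \<Rightarrow> 'b::finite. \<forall>x. x \<notin> A \<longrightarrow> f x = c}"
  using finite_set_of_finite_funs[of A "UNIV :: 'b set" c] by simp

context
  fixes V :: "'v set" and D :: "('v \<times> 'v) set" and r :: 'v
  assumes T: "tree_directed_from V D r"
begin

lemma qformula:
  fixes psi :: "'v \<times> 'v \<Rightarrow> 'g::{finite,ab_group_add} \<Rightarrow> real" and g :: "'v \<Rightarrow> 'g"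
  assumes cd: "cyclic_decomp K n phi"
  shows "qfour K n phi V D r psi g = (\<Prod>d\<in>D. fourier K n phi (fvec (psi d))
            (\<Sum>x\<in>{x\<in>leaves V D. (snd d, x) \<in> D\<^sup>*}. g x))"
proof -
  define L where "L = leaves V D"
  have LV: "L \<subseteq> V" unfolding L_def by (rule leaves_sub)
  have finL: "finite L" using LV T_finV[OF T] finite_subset by blast
  have finD: "finite D" by (rule T_finD[OF T])
  define Sg where "Sg = {\<sigma>::'v\<Rightarrow>'g. (\<forall>x. x \<notin> V \<longrightarrow> \<sigma> x = 0) \<and> \<sigma> r = 0}"
  define W where "W \<sigma> = (\<Prod>e\<in>D. Pmat (psi e) (\<sigma> (fst e)) (\<sigma> (snd e)))" for \<sigma>
  define C where "C \<sigma> = (\<Prod>x\<in>L. gchar K n phi (g x) (\<sigma> x))" for \<sigma>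
  define rho where "rho \<sigma> = (\<lambda>x. if x \<in> L then \<sigma> x else (0::'g))" for \<sigma>
  have finSg: "finite Sg"
  proof -
    have "Sg \<subseteq> {f. \<forall>x. x \<notin> V \<longrightarrow> f x = 0}" unfolding Sg_def by auto
    then show ?thesis using finite_zero_funs[OF T_finV[OF T]] finite_subset by blast
  qed
  have finLC: "finite (leaf_cfgs L :: ('v \<Rightarrow> 'g) set)" unfolding leaf_cfgs_def by (rule finite_zero_funs[OF finL])
  have step1: "qfour K n phi V D r psi g = (\<Sum>\<sigma>\<in>Sg. C \<sigma> * complex_of_real (W \<sigma>))"
  proof -
    have "qfour K n phi V D r psi g = (\<Sum>h\<in>leaf_cfgs L. \<Sum>\<sigma>\<in>{\<sigma>. \<sigma> \<in> Sg \<and> rho \<sigma> = h}. C \<sigma> * complex_of_real (W \<sigma>))"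
      unfolding qfour_def L_def[symmetric]
    proof (rule sum.cong[OF refl])
      fix h :: "'v \<Rightarrow> 'g" assume h: "h \<in> leaf_cfgs L"
      have set: "{\<sigma>. \<sigma> \<in> Sg \<and> rho \<sigma> = h} = {\<sigma>. (\<forall>x. x \<notin> V \<longrightarrow> \<sigma> x = 0) \<and> \<sigma> r = 0 \<and> (\<forall>x\<in>L. \<sigma> x = h x)}"
        using h unfolding Sg_def rho_def leaf_cfgs_def by (auto simp: fun_eq_iff)
      have "(\<Prod>x\<in>L. gchar K n phi (g x) (h x)) * complex_of_real (pprob V D r psi h)
          = (\<Sum>\<sigma>\<in>{\<sigma>. \<sigma> \<in> Sg \<and> rho \<sigma> = h}. (\<Prod>x\<in>L. gchar K n phi (g x) (h x)) * complex_of_real (W \<sigma>))"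
        unfolding pprob_def L_def[symmetric] set[symmetric] W_def by (simp add: sum_distrib_left)
      also have "\<dots> = (\<Sum>\<sigma>\<in>{\<sigma>. \<sigma> \<in> Sg \<and> rho \<sigma> = h}. C \<sigma> * complex_of_real (W \<sigma>))"
      proof (rule sum.cong[OF refl])
        fix \<sigma> assume "\<sigma> \<in> {\<sigma>. \<sigma> \<in> Sg \<and> rho \<sigma> = h}"
        then have "\<forall>x\<in>L. h x = \<sigma> x" unfolding rho_def by auto
        then show "(\<Prod>x\<in>L. gchar K n phi (g x) (h x)) * complex_of_real (W \<sigma>) = C \<sigma> * complex_of_real (W \<sigma>)"
          unfolding C_def by simp
      qed
      finally show "(\<Prod>x\<in>L. gchar K n phi (g x) (h x)) * complex_of_real (pprob V D r psi h)
          = (\<Sum>\<sigma>\<in>{\<sigma>. \<sigma> \<in> Sg \<and> rho \<sigma> = h}. C \<sigma> * complex_of_real (W \<sigma>))" .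
    qed
    also have "\<dots> = (\<Sum>\<sigma>\<in>Sg. C \<sigma> * complex_of_real (W \<sigma>))"
    proof (rule sum.group[OF finSg finLC])
      show "rho ` Sg \<subseteq> leaf_cfgs L" unfolding rho_def leaf_cfgs_def by auto
    qed
    finally show ?thesis .
  qed
  have ancx: "\<And>x. anc D x = {d. d \<in> D \<and> (snd d, x) \<in> D\<^sup>*}" by (rule anc_eq[OF T])
  define tau where "tau \<sigma> d = \<sigma> (snd d) - \<sigma> (fst d)" for \<sigma> :: "'v \<Rightarrow> 'g" and d :: "'v \<times> 'v"
  define star where "star d = (\<Sum>x\<in>{x\<in>L. (snd d, x) \<in> D\<^sup>*}. g x)" for d :: "'v \<times> 'v"
  define H where "H d t = gchar K n phi (star d) t * complex_of_real (fvec (psi d) t)" for d :: "'v \<times> 'v" and t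
  have step2: "C \<sigma> * complex_of_real (W \<sigma>) = (\<Prod>d\<in>D. H d (tau \<sigma> d))" if s: "\<sigma> \<in> Sg" for \<sigma>
  proof -
    have s0: "\<sigma> r = 0" using s unfolding Sg_def by simp
    have Wf: "W \<sigma> = (\<Prod>d\<in>D. fvec (psi d) (tau \<sigma> d))" by (simp add: W_def tau_def Pmat_circ)
    have "C \<sigma> = (\<Prod>x\<in>L. gchar K n phi (g x) (\<Sum>d\<in>anc D x. tau \<sigma> d))"
      unfolding C_def
    proof (rule prod.cong[OF refl])
      fix x assume "x \<in> L"
      then have "x \<in> V" using LV by auto
      then show "gchar K n phi (g x) (\<sigma> x) = gchar K n phi (g x) (\<Sum>d\<in>anc D x. tau \<sigma> d)"
        using telescope[OF T, where \<sigma>=\<sigma>, OF s0] unfolding tau_def by simp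
    qed
    also have "\<dots> = (\<Prod>x\<in>L. \<Prod>d\<in>anc D x. gchar K n phi (g x) (tau \<sigma> d))"
      by (simp add: gchar_sum2[OF cd])
    also have "\<dots> = (\<Prod>d\<in>D. \<Prod>x\<in>{x. x \<in> L \<and> (snd d, x) \<in> D\<^sup>*}. gchar K n phi (g x) (tau \<sigma> d))"
      unfolding ancx by (rule prod.swap_restrict[OF finL finD])
    also have "\<dots> = (\<Prod>d\<in>D. gchar K n phi (star d) (tau \<sigma> d))"
      unfolding star_def by (simp add: gchar_sum1[OF cd])
    finally have Cf: "C \<sigma> = (\<Prod>d\<in>D. gchar K n phi (star d) (tau \<sigma> d))" .
    show ?thesis unfolding Cf Wf H_def by (simp add: prod.distrib)
  qed
  define U where "U \<tau> = (\<lambda>x. if x \<in> V then (\<Sum>d\<in>anc D x. \<tau> d) else 0)" for \<tau> :: "'v \<times> 'v \<Rightarrow> 'g"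
  have step3: "(\<Sum>\<sigma>\<in>Sg. \<Prod>d\<in>D. H d (tau \<sigma> d)) = (\<Sum>\<tau>\<in>PiE D (\<lambda>_. UNIV). \<Prod>d\<in>D. H d (\<tau> d))"
  proof (rule sum.reindex_bij_witness[of _ U "\<lambda>\<sigma>. restrict (tau \<sigma>) D"])
    fix a :: "'v \<Rightarrow> 'g" assume a: "a \<in> Sg"
    then have a0: "a r = 0" and av: "\<forall>x. x \<notin> V \<longrightarrow> a x = 0" unfolding Sg_def by auto
    show "U (restrict (tau a) D) = a"
    proof
      fix x show "U (restrict (tau a) D) x = a x"
      proof (cases "x \<in> V")
        case True
        have "(\<Sum>d\<in>anc D x. restrict (tau a) D d) = (\<Sum>d\<in>anc D x. tau a d)"
          using anc_sub[OF T] by (intro sum.cong) auto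
        then show ?thesis using telescope[OF T, where \<sigma>=a, OF a0 True] True unfolding U_def tau_def by simp
      next
        case False then show ?thesis using av unfolding U_def by simp
      qed
    qed
    show "restrict (tau a) D \<in> PiE D (\<lambda>_. UNIV)" by simp
    show "(\<Prod>d\<in>D. H d (restrict (tau a) D d)) = (\<Prod>d\<in>D. H d (tau a d))"
      by (rule prod.cong) auto
  next
    fix b :: "'v \<times> 'v \<Rightarrow> 'g" assume b: "b \<in> PiE D (\<lambda>_. UNIV)"
    show "U b \<in> Sg" unfolding Sg_def U_def using anc_root[OF T] T_rV[OF T] by simp
    show "restrict (tau (U b)) D = b"
    proof
      fix d show "restrict (tau (U b)) D d = b d"
      proof (cases "d \<in> D")
        case True
        obtain u v where d: "d = (u,v)" by (cases d)
        have uv: "(u,v) \<in> D" using True d by simp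
        have "U b v = b (u,v) + U b u"
          using anc_step[OF T uv] anc_fin[OF T] T_sub[OF T uv] unfolding U_def by simp
        then show ?thesis using True d unfolding tau_def by simp
      next
        case False
        have "b d = undefined" using b False by (simp add: PiE_def extensional_def, metis prod.collapse)
        then show ?thesis using False by simp
      qed
    qed
  qed
  have step4: "(\<Sum>\<tau>\<in>PiE D (\<lambda>_. UNIV). \<Prod>d\<in>D. H d (\<tau> d)) = (\<Prod>d\<in>D. \<Sum>t\<in>UNIV. H d t)"
    by (rule prod_sum_PiE[OF finD, symmetric]) simp
  have "qfour K n phi V D r psi g = (\<Prod>d\<in>D. \<Sum>t\<in>UNIV. H d t)"
    unfolding step1 using step2 step3 step4 by (simp cong: sum.cong)
  then show ?thesis unfolding H_def star_def fourier_def L_def .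
qed

end

context
  fixes V :: "'v set" and D :: "('v \<times> 'v) set" and r :: 'v
  assumes T: "tree_directed_from V D r"
begin

lemma cross_edge:
  assumes uv: "(u,v) \<in> D" and a: "(v,a) \<in> D\<^sup>*" and b: "(v,b) \<notin> D\<^sup>*"
    and e: "e = (a,b) \<or> e = (b,a)" and eD: "e \<in> D"
  shows "e = (u,v)"
proof -
  have "adj D a b" using e eD unfolding adj_def by auto
  then have ab: "a = v \<and> b = u" using acl[OF T uv a b] by simp
  show ?thesis
  proof (cases "e = (a,b)")
    case True
    then have "(v,u) \<in> D" using ab eD by simp
    then have "(v,b) \<in> D\<^sup>*" using ab by auto
    then show ?thesis using b by simp
  next
    case False then show ?thesis using e ab by auto
  qed
qed

lemma path_self: "tpath D x x xs \<Longrightarrow> set xs = {x}"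
proof -
  assume p: "tpath D x x xs"
  then obtain a ys where xs: "xs = a # ys" unfolding tpath_def by (cases xs) auto
  have "ys = []"
  proof (rule ccontr)
    assume "ys \<noteq> []"
    then have "last xs \<in> set ys" "last xs = a" using p unfolding xs tpath_def by auto
    then show False using p unfolding xs tpath_def by auto
  qed
  then show ?thesis using p unfolding xs tpath_def by auto
qed

end

lemma zcfg_sum:
  fixes a b c d :: "'g::ab_group_add"
  assumes "finite S" "i \<noteq> j" "i \<noteq> i'" "i \<noteq> j'" "j \<noteq> i'" "j \<noteq> j'" "i' \<noteq> j'"
  shows "(\<Sum>x\<in>S. zcfg i j i' j' a b c d x) = (if i \<in> S then a else 0) + (if j \<in> S then b else 0)
     + (if i' \<in> S then c else 0) + (if j' \<in> S then d else 0)"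
proof -
  have "zcfg i j i' j' a b c d = (\<lambda>x. (if x = i then a else 0) + (if x = j then b else 0)
     + (if x = i' then c else 0) + (if x = j' then d else 0))"
    using assms unfolding zcfg_def by (auto simp: fun_eq_iff)
  then show ?thesis using assms(1) by (simp add: sum.distrib)
qed

theorem mainTheorem6:
  fixes K :: nat and n :: "nat \<Rightarrow> nat" and phi :: "'g::{finite,ab_group_add} \<Rightarrow> nat \<Rightarrow> int"
    and V :: "'v set" and D :: "('v \<times> 'v) set" and r :: 'v
    and psi :: "'v \<times> 'v \<Rightarrow> 'g \<Rightarrow> real"
    and e :: "'v \<times> 'v" and \<nu> \<nu>' i j i' j' :: 'v
  assumes "cyclic_decomp K n phi"
    and "tree_directed_from V D r"
    and "r \<in> leaves V D"
    and "\<forall>d\<in>D. (\<Sum>g\<in>UNIV. psi d g) = 0"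
    and "\<forall>d\<in>D. \<forall>g. psi d g = psi d (- g)"
    and "internal_edge V D e"
    and "e = (\<nu>, \<nu>') \<or> e = (\<nu>', \<nu>)"
    and "i \<in> leaves V D" and "j \<in> leaves V D" and "i' \<in> leaves V D" and "j' \<in> leaves V D"
    and "on_path D i j \<nu>" and "\<not> on_path D i j \<nu>'"
    and "on_path D i' j' \<nu>'" and "\<not> on_path D i' j' \<nu>"
  shows "\<forall>h::'g.
     qfour K n phi V D r psi (zcfg i j i' j' h (- h) 0 0) *
       qfour K n phi V D r psi (zcfg i j i' j' 0 0 (- h) h) \<noteq> 0 \<and>
     (fourier K n phi (fvec (psi e)) h)\<^sup>2 =
       qfour K n phi V D r psi (zcfg i j i' j' h 0 (- h) 0) *
       qfour K n phi V D r psi (zcfg i j i' j' 0 (- h) 0 h) /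
       (qfour K n phi V D r psi (zcfg i j i' j' h (- h) 0 0) *
        qfour K n phi V D r psi (zcfg i j i' j' 0 0 (- h) h))"
proof
  fix h :: 'g
  note cd = assms(1) and T = assms(2)
  define L where "L = leaves V D"
  define E where "E d g = fourier K n phi (fvec (psi d)) g" for d g
  have finD: "finite D" by (rule T_finD[OF T])
  have LV: "L \<subseteq> V" unfolding L_def by (rule leaves_sub)
  have finL: "finite L" by (rule finite_subset[OF LV T_finV[OF T]])
  have Enz: "E d g \<noteq> 0" for d g unfolding E_def fourier_fvec[OF cd] by simp
  have E0: "E d 0 = 1" if "d \<in> D" for d
  proof -
    have "(\<Sum>g\<in>UNIV. psi d g) = 0" using assms(4) that by blast
    then have "lam K n phi (psi d) 0 = 0" by (rule lam_zero[OF cd])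
    then show ?thesis unfolding E_def fourier_fvec[OF cd] by simp
  qed
  have Eneg: "E d (- g) = E d g" if "d \<in> D" for d g
  proof -
    have "\<forall>g. psi d g = psi d (- g)" using assms(5) that by blast
    then have "lam K n phi (psi d) (- g) = lam K n phi (psi d) g" by (rule lam_neg[OF cd])
    then show ?thesis unfolding E_def fourier_fvec[OF cd] by simp
  qed
  have eD: "e \<in> D" and nuL: "\<nu> \<notin> L" "\<nu>' \<notin> L"
    using assms(6,7) unfolding internal_edge_def L_def by auto
  obtain p c where pc: "e = (p,c)" by (cases e)
  obtain xs1 where xs1: "tpath D i j xs1" "\<nu> \<in> set xs1" using assms(12) unfolding on_path_def by blast
  have nxs1: "\<nu>' \<notin> set xs1" using assms(13) xs1(1) unfolding on_path_def by blast
  obtain xs2 where xs2: "tpath D i' j' xs2" "\<nu>' \<in> set xs2" using assms(14) unfolding on_path_def by blast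
  have nxs2: "\<nu> \<notin> set xs2" using assms(15) xs2(1) unfolding on_path_def by blast
  have pcD: "(p,c) \<in> D" using eD pc by simp
  have nupc: "(\<nu> = p \<and> \<nu>' = c) \<or> (\<nu> = c \<and> \<nu>' = p)" using assms(7) pc by auto
  define B where "B w = ((c,w) \<in> D\<^sup>*)" for w
  have Bc: "B c" unfolding B_def by simp
  have Bp: "\<not> B p"
  proof
    assume "B p"
    then have "(p,p) \<in> D\<^sup>+" using pcD rtrancl_into_trancl2[of p c D p] unfolding B_def by simp
    then show False using T_acyc[OF T] by simp
  qed
  have Bij: "B i = B j"
  proof (rule ccontr)
    assume "B i \<noteq> B j"
    then have "p \<in> set xs1 \<and> c \<in> set xs1" using P_cross[OF T pcD xs1(1)] unfolding B_def by simp
    then show False using nxs1 nupc by auto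
  qed
  have Bij': "B i' = B j'"
  proof (rule ccontr)
    assume "B i' \<noteq> B j'"
    then have "p \<in> set xs2 \<and> c \<in> set xs2" using P_cross[OF T pcD xs2(1)] unfolding B_def by simp
    then show False using nxs2 nupc by auto
  qed
  have Bnu: "B \<nu> = B i" using P_same[OF T pcD xs1(1) _ xs1(2)] Bij unfolding B_def by simp
  have Bnu': "B \<nu>' = B i'" using P_same[OF T pcD xs2(1) _ xs2(2)] Bij' unfolding B_def by simp
  have Bii': "B i \<noteq> B i'" using Bnu Bnu' nupc Bc Bp by auto
  have sideB1: "B w = B i" if "w \<in> set xs1" for w
    using P_same[OF T pcD xs1(1) _ that] Bij unfolding B_def by simp
  have sideB2: "B w = B i'" if "w \<in> set xs2" for w
    using P_same[OF T pcD xs2(1) _ that] Bij' unfolding B_def by simp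
  have ij: "i \<noteq> j"
  proof
    assume "i = j"
    then have "set xs1 = {i}" using path_self[OF T] xs1(1) by simp
    then show False using xs1(2) nuL assms(8) unfolding L_def by auto
  qed
  have ij': "i' \<noteq> j'"
  proof
    assume "i' = j'"
    then have "set xs2 = {i'}" using path_self[OF T] xs2(1) by simp
    then show False using xs2(2) nuL assms(10) unfolding L_def by auto
  qed
  have dist: "i \<noteq> i'" "i \<noteq> j'" "j \<noteq> i'" "j \<noteq> j'" using Bij Bij' Bii' by auto
  have X1: "\<not> (((v,i) \<in> D\<^sup>*) \<noteq> ((v,j) \<in> D\<^sup>*) \<and> ((v,i') \<in> D\<^sup>*) \<noteq> ((v,j') \<in> D\<^sup>*))"
    if uv: "(u,v) \<in> D" for u v
  proof
    assume a: "((v,i) \<in> D\<^sup>*) \<noteq> ((v,j) \<in> D\<^sup>*) \<and> ((v,i') \<in> D\<^sup>*) \<noteq> ((v,j') \<in> D\<^sup>*)"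
    have "v \<in> set xs1" using P_cross[OF T uv xs1(1)] a by simp
    moreover have "v \<in> set xs2" using P_cross[OF T uv xs2(1)] a by simp
    ultimately show False using sideB1 sideB2 Bii' by metis
  qed
  have X2: "(u,v) = e"
    if uv: "(u,v) \<in> D" and a: "((v,i) \<in> D\<^sup>*) = ((v,j) \<in> D\<^sup>*)" "((v,i') \<in> D\<^sup>*) = ((v,j') \<in> D\<^sup>*)"
       "((v,i) \<in> D\<^sup>*) \<noteq> ((v,i') \<in> D\<^sup>*)" for u v
  proof -
    have s1: "((v,\<nu>) \<in> D\<^sup>*) = ((v,i) \<in> D\<^sup>*)" using P_same[OF T uv xs1(1) a(1) xs1(2)] .
    have s2: "((v,\<nu>') \<in> D\<^sup>*) = ((v,i') \<in> D\<^sup>*)" using P_same[OF T uv xs2(1) a(2) xs2(2)] .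
    show ?thesis
    proof (cases "(v,i) \<in> D\<^sup>*")
      case True
      then have "(v,\<nu>) \<in> D\<^sup>*" "(v,\<nu>') \<notin> D\<^sup>*" using s1 s2 a(3) by auto
      then show ?thesis using cross_edge[OF T uv _ _ assms(7) eD] by simp
    next
      case False
      then have "(v,\<nu>') \<in> D\<^sup>*" "(v,\<nu>) \<notin> D\<^sup>*" using s1 s2 a(3) by auto
      moreover have "e = (\<nu>', \<nu>) \<or> e = (\<nu>, \<nu>')" using assms(7) by auto
      ultimately show ?thesis using cross_edge[OF T uv _ _ _ eD] by simp
    qed
  qed
  define Sd where "Sd d = {x\<in>L. (snd d, x) \<in> D\<^sup>*}" for d :: "'v \<times> 'v"
  have finS: "finite (Sd d)" for d using finL unfolding Sd_def by simp
  have q: "qfour K n phi V D r psi g = (\<Prod>d\<in>D. E d (\<Sum>x\<in>Sd d. g x))" for g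
    unfolding E_def Sd_def L_def by (rule qformula[OF T cd])
  have zs: "(\<Sum>x\<in>Sd d. zcfg i j i' j' a b c' d' x) =
     (if (snd d, i) \<in> D\<^sup>* then a else 0) + (if (snd d, j) \<in> D\<^sup>* then b else 0)
     + (if (snd d, i') \<in> D\<^sup>* then c' else 0) + (if (snd d, j') \<in> D\<^sup>* then d' else 0)" for d and a b c' d' :: 'g
  proof -
    have "i \<in> L" "j \<in> L" "i' \<in> L" "j' \<in> L" using assms(8-11) unfolding L_def by auto
    then have m: "(i \<in> Sd d) = ((snd d, i) \<in> D\<^sup>*)" "(j \<in> Sd d) = ((snd d, j) \<in> D\<^sup>*)"
      "(i' \<in> Sd d) = ((snd d, i') \<in> D\<^sup>*)" "(j' \<in> Sd d) = ((snd d, j') \<in> D\<^sup>*)"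
      unfolding Sd_def by auto
    show ?thesis by (subst zcfg_sum[OF finS ij dist(1,2,3,4) ij']) (simp only: m)
  qed
  let ?z1 = "zcfg i j i' j' h 0 (- h) 0" and ?z2 = "zcfg i j i' j' 0 (- h) 0 h"
    and ?z3 = "zcfg i j i' j' h (- h) 0 0" and ?z4 = "zcfg i j i' j' 0 0 (- h) h"
  have edge: "E d (\<Sum>x\<in>Sd d. ?z1 x) * E d (\<Sum>x\<in>Sd d. ?z2 x)
      = (if d = e then E e h ^ 2 else 1) * (E d (\<Sum>x\<in>Sd d. ?z3 x) * E d (\<Sum>x\<in>Sd d. ?z4 x))"
    if dD: "d \<in> D" for d
  proof -
    obtain u v where d: "d = (u,v)" by (cases d)
    have uv: "(u,v) \<in> D" using dD d by simp
    note E0d = E0[OF dD] and Enegd = Eneg[OF dD]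
    have sv: "snd d = v" using d by simp
    define I where "I = ((v,i) \<in> D\<^sup>*)"
    define J where "J = ((v,j) \<in> D\<^sup>*)"
    define I' where "I' = ((v,i') \<in> D\<^sup>*)"
    define J' where "J' = ((v,j') \<in> D\<^sup>*)"
    have goal: "E d ((if I then h else 0) + (if J then 0 else 0) + (if I' then - h else 0) + (if J' then 0 else 0)) *
        E d ((if I then 0 else 0) + (if J then - h else 0) + (if I' then 0 else 0) + (if J' then h else 0)) =
        (if d = e then E e h ^ 2 else 1) *
        (E d ((if I then h else 0) + (if J then - h else 0) + (if I' then 0 else 0) + (if J' then 0 else 0)) *
         E d ((if I then 0 else 0) + (if J then 0 else 0) + (if I' then - h else 0) + (if J' then h else 0)))"
    proof (cases "d = e")
      case True
      then have v: "v = c" using pc d by simp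
      have c3: "I = J" "I' = J'" "I \<noteq> I'" using Bij Bij' Bii' unfolding I_def J_def I'_def J'_def B_def v by auto
      show ?thesis using True c3 E0d Enegd
        by (cases I; cases I') (simp_all add: power2_eq_square)
    next
      case False
      have c1: "\<not> (I \<noteq> J \<and> I' \<noteq> J')"
        using X1[OF uv] unfolding I_def J_def I'_def J'_def .
      have c2: "\<not> (I = J \<and> I' = J' \<and> I \<noteq> I')"
        using X2[OF uv] False d unfolding I_def J_def I'_def J'_def by auto
      show ?thesis using False c1 c2 E0d Enegd
        by (cases I; cases J; cases I'; cases J') simp_all
    qed
    show ?thesis unfolding zs sv I_def[symmetric] J_def[symmetric] I'_def[symmetric] J'_def[symmetric]
      by (rule goal)
  qed
  have "qfour K n phi V D r psi ?z1 * qfour K n phi V D r psi ?z2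
      = (\<Prod>d\<in>D. (if d = e then E e h ^ 2 else 1) * (E d (\<Sum>x\<in>Sd d. ?z3 x) * E d (\<Sum>x\<in>Sd d. ?z4 x)))"
    unfolding q prod.distrib[symmetric] by (rule prod.cong[OF refl]) (rule edge)
  also have "\<dots> = E e h ^ 2 * (qfour K n phi V D r psi ?z3 * qfour K n phi V D r psi ?z4)"
    unfolding q prod.distrib using finD eD by (simp add: prod.delta)
  finally have main: "qfour K n phi V D r psi ?z1 * qfour K n phi V D r psi ?z2
      = E e h ^ 2 * (qfour K n phi V D r psi ?z3 * qfour K n phi V D r psi ?z4)" .
  have nz: "qfour K n phi V D r psi ?z3 * qfour K n phi V D r psi ?z4 \<noteq> 0"
    unfolding q using finD Enz by simp
  show "qfour K n phi V D r psi ?z3 * qfour K n phi V D r psi ?z4 \<noteq> 0 \<and>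
     (fourier K n phi (fvec (psi e)) h)\<^sup>2 =
       qfour K n phi V D r psi ?z1 * qfour K n phi V D r psi ?z2 /
       (qfour K n phi V D r psi ?z3 * qfour K n phi V D r psi ?z4)"
    using nz unfolding main E_def by simp
qed

end
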